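(* Let $T>0$, $\gamma\in(0,1]$, $C_T=\{(t,s):0<s<t<T\}$, and let $g_1,g_2$ be Hölder continuous functions of order $\gamma$ on $C_T$. Define, for $(t,s)\in C_T$, $$h(t,s)=\int_s^t\frac{g_1(t,z)\,g_2(z,s)}{\sqrt{t-z}\,\sqrt{z-s}}\,dz.$$ Then $h$ is Hölder continuous of order $\gamma$ on $C_T$. *)

theory Defs
  imports "HOL-Analysis.Analysis"
begin

definition CT :: "real \<Rightarrow> (real \<times> real) set" where
  "CT T = {(t, s). 0 < s \<and> s < t \<and> t < T}"

definition holder_on :: "real \<Rightarrow> (real \<times> real) set \<Rightarrow> (real \<times> real \<Rightarrow> real) \<Rightarrow> bool" where
  "holder_on \<gamma> S f \<longleftrightarrow> (\<exists>K. \<forall>x\<in>S. \<forall>y\<in>S. \<bar>f x - f y\<bar> \<le> K * dist x y powr \<gamma>)"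

end

theory Submission
  imports Defs
begin

definition w :: "real \<Rightarrow> real" where "w u = 1 / sqrt u + 1 / sqrt (1 - u)"

lemma sqrt_ge_self: assumes "0 \<le> x" "x \<le> 1" shows "x \<le> sqrt x"
proof -
  have "sqrt x \<le> 1" using assms by simp
  then have "sqrt x * sqrt x \<le> sqrt x * 1" using assms by (intro mult_left_mono) auto
  moreover have "sqrt x * sqrt x = x" using assms by simp
  ultimately show ?thesis by linarith
qed

lemma inv_le_w: assumes "0 < u" "u < 1" shows "1 / sqrt (u * (1 - u)) \<le> w u"
proof -
  have a: "sqrt u + sqrt (1 - u) \<ge> 1" using sqrt_ge_self[of u] sqrt_ge_self[of "1-u"] assms by auto
  have p: "sqrt u > 0" "sqrt (1-u) > 0" using assms by auto
  have "w u = (sqrt u + sqrt (1 - u)) / (sqrt u * sqrt (1 - u))"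
    unfolding w_def using p by (simp add: field_simps)
  also have "\<dots> \<ge> 1 / (sqrt u * sqrt (1 - u))"
    using a p by (intro divide_right_mono) auto
  finally show ?thesis by (simp add: real_sqrt_mult)
qed

lemma w_nonneg: "0 \<le> u \<Longrightarrow> u \<le> 1 \<Longrightarrow> w u \<ge> 0" unfolding w_def by simp

lemma int1: "((\<lambda>u. 1 / sqrt u) has_integral 2) {0..1::real}"
proof -
  have "((\<lambda>u. 1 / sqrt u) has_integral ((\<lambda>u. 2 * sqrt u) 1 - (\<lambda>u. 2 * sqrt u) 0)) {0..1::real}"
  proof (rule fundamental_theorem_of_calculus_interior)
    show "continuous_on {0..1} (\<lambda>u. 2 * sqrt u)" by (intro continuous_intros)
    fix x :: real assume "x \<in> {0<..<1}"
    then have "x > 0" by simp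
    then show "((\<lambda>u. 2 * sqrt u) has_vector_derivative 1 / sqrt x) (at x)"
      unfolding has_real_derivative_iff_has_vector_derivative[symmetric]
      by (auto intro!: derivative_eq_intros simp: field_simps)
  qed simp
  then show ?thesis by simp
qed

lemma int2: "((\<lambda>u. 1 / sqrt (1 - u)) has_integral 2) {0..1::real}"
proof -
  have "((\<lambda>u. 1 / sqrt (1 - u)) has_integral ((\<lambda>u. - 2 * sqrt (1 - u)) 1 - (\<lambda>u. - 2 * sqrt (1 - u)) 0)) {0..1::real}"
  proof (rule fundamental_theorem_of_calculus_interior)
    show "continuous_on {0..1} (\<lambda>u. - 2 * sqrt (1 - u))" by (intro continuous_intros)
    fix x :: real assume "x \<in> {0<..<1}"
    then have "1 - x > 0" by simp
    then show "((\<lambda>u. - 2 * sqrt (1 - u)) has_vector_derivative 1 / sqrt (1 - x)) (at x)"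
      unfolding has_real_derivative_iff_has_vector_derivative[symmetric]
      by (auto intro!: derivative_eq_intros simp: field_simps)
  qed simp
  then show ?thesis by simp
qed

lemma w_int: "w integrable_on {0..1}"
  unfolding w_def using has_integral_add[OF int1 int2] by blast

lemma dom_int:
  fixes G :: "real \<Rightarrow> real"
  assumes c: "continuous_on {0<..<1} G" and b: "\<And>u. u \<in> {0<..<1} \<Longrightarrow> \<bar>G u\<bar> \<le> B * w u"
  shows "G integrable_on {0..1}"
proof -
  have S: "{0<..<1::real} \<in> sets lebesgue" by (simp add: borel_open)
  have "(\<lambda>u. B * w u) integrable_on {0..1}"
    using integrable_on_cmult_left[OF w_int, of B] by simp
  then have "(\<lambda>u. B * w u) integrable_on {0<..<1}"
    by (simp only: integrable_on_open_interval_real)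
  then have "G integrable_on {0<..<1}"
    by (rule measurable_bounded_by_integrable_imp_integrable_real[OF continuous_imp_measurable_on_sets_lebesgue[OF c S] _ b S])
  then show ?thesis by (simp only: integrable_on_open_interval_real)
qed

lemma aux: "(c::real) \<noteq> 0 \<Longrightarrow> 1/c * (a/(b/c)) = a/b"
  by (cases "b = 0") (simp_all add: field_simps)

lemma transform:
  fixes F :: "real \<Rightarrow> real"
  assumes st: "s < t" and int: "(\<lambda>u. F (s + (t - s) * u) / sqrt (u * (1 - u))) integrable_on {0..1}"
  shows "integral {s..t} (\<lambda>z. F z / (sqrt (t - z) * sqrt (z - s))) = integral {0..1} (\<lambda>u. F (s + (t - s) * u) / sqrt (u * (1 - u)))"
proof -
  define G where "G = (\<lambda>u. F (s + (t - s) * u) / sqrt (u * (1 - u)))"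
  obtain I where I: "(G has_integral I) (cbox 0 1)" using int unfolding G_def integrable_on_def by auto
  have m: "1 / (t - s) \<noteq> 0" using st by simp
  have img: "(\<lambda>x. (1 / (1 / (t - s))) *\<^sub>R x + - ((1 / (1 / (t - s))) *\<^sub>R (- s / (t - s)))) ` cbox 0 1 = {s..t}"
  proof -
    have "(\<lambda>x. (1 / (1 / (t - s))) *\<^sub>R x + - ((1 / (1 / (t - s))) *\<^sub>R (- s / (t - s)))) = (\<lambda>x. (t - s) * x + s)"
      using st by (auto simp: field_simps)
    then show ?thesis using st by (simp add: image_affinity_atLeastAtMost)
  qed
  have k: "(1 / (\<bar>1 / (t - s)\<bar> ^ DIM(real))) *\<^sub>R I = (t - s) * I" using st by simp
  have "((\<lambda>z. G (1 / (t - s) * z + - s / (t - s))) has_integral (t - s) * I) {s..t}"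
    using has_integral_affinity[OF I m, of "- s / (t - s)"] unfolding img k by simp
  from has_integral_cmul[OF this, of "1 / (t - s)"]
  have h: "((\<lambda>z. 1 / (t - s) * G (1 / (t - s) * z + - s / (t - s))) has_integral I) {s..t}"
    using st by simp
  have eq: "1 / (t - s) * G (1 / (t - s) * z + - s / (t - s)) = F z / (sqrt (t - z) * sqrt (z - s))"
    if "z \<in> {s..t}" for z
  proof -
    have u: "1 / (t - s) * z + - s / (t - s) = (z - s) / (t - s)" using st by (simp add: divide_simps)
    have e: "(t - s) * ((z - s) / (t - s)) = z - s" using st by simp
    have "s + (t - s) * ((z - s) / (t - s)) = z" unfolding e by simp
    then have Fz: "F (s + (t - s) * ((z - s) / (t - s))) = F z" by (simp only:)
    have sq: "sqrt ((z - s) / (t - s) * (1 - (z - s) / (t - s))) = sqrt (t - z) * sqrt (z - s) / (t - s)"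
    proof -
      have "(z - s) / (t - s) * (1 - (z - s) / (t - s)) = ((t - z) * (z - s)) / (t - s)^2"
        using st by (simp add: field_simps power2_eq_square)
      then show ?thesis using st by (simp add: real_sqrt_divide real_sqrt_mult)
    qed
    have g: "G ((z - s) / (t - s)) = F z / (sqrt (t - z) * sqrt (z - s) / (t - s))"
      by (simp only: G_def Fz sq)
    show ?thesis unfolding u g by (rule aux) (use st in simp)
  qed
  have "((\<lambda>z. F z / (sqrt (t - z) * sqrt (z - s))) has_integral I) {s..t}"
    using has_integral_eq[OF eq h] by simp
  then have "integral {s..t} (\<lambda>z. F z / (sqrt (t - z) * sqrt (z - s))) = I" by (rule integral_unique)
  moreover have "integral {0..1} G = I" using integral_unique[OF I] by (simp add: cbox_interval)
  ultimately show ?thesis unfolding G_def by simp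
qed

lemma dist_le: "dist (a, b) (c, d) \<le> \<bar>a - c\<bar> + \<bar>b - (d::real)\<bar>"
  unfolding dist_Pair_Pair dist_real_def power2_abs by (rule sqrt_sum_squares_le_sum_abs)

lemma holder_K:
  assumes "holder_on \<gamma> S f"
  shows "\<exists>K\<ge>0. \<forall>x\<in>S. \<forall>y\<in>S. \<bar>f x - f y\<bar> \<le> K * dist x y powr \<gamma>"
proof -
  obtain K where K: "\<forall>x\<in>S. \<forall>y\<in>S. \<bar>f x - f y\<bar> \<le> K * dist x y powr \<gamma>"
    using assms unfolding holder_on_def by blast
  have "\<forall>x\<in>S. \<forall>y\<in>S. \<bar>f x - f y\<bar> \<le> max K 0 * dist x y powr \<gamma>"
  proof (intro ballI)
    fix x y assume "x \<in> S" "y \<in> S"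
    then have "\<bar>f x - f y\<bar> \<le> K * dist x y powr \<gamma>" using K by blast
    also have "\<dots> \<le> max K 0 * dist x y powr \<gamma>" by (intro mult_right_mono) auto
    finally show "\<bar>f x - f y\<bar> \<le> max K 0 * dist x y powr \<gamma>" .
  qed
  then show ?thesis by (intro exI[of _ "max K 0"]) auto
qed

lemma holder_cont:
  assumes "holder_on \<gamma> S f" "\<gamma> > 0"
  shows "continuous_on S f"
proof -
  obtain K where K: "K \<ge> 0" "\<forall>x\<in>S. \<forall>y\<in>S. \<bar>f x - f y\<bar> \<le> K * dist x y powr \<gamma>"
    using holder_K[OF assms(1)] by blast
  show ?thesis unfolding continuous_on_def
  proof
    fix x assume x: "x \<in> S"
    have ev: "eventually (\<lambda>y. norm (f y - f x) \<le> K * dist y x powr \<gamma>) (at x within S)"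
      unfolding eventually_at using x K by (intro exI[of _ 1]) auto
    have "((\<lambda>y. dist y x) \<longlongrightarrow> dist x x) (at x within S)"
      by (intro tendsto_intros)
    then have d: "((\<lambda>y. dist y x) \<longlongrightarrow> 0) (at x within S)" by simp
    have "((\<lambda>y. dist y x powr \<gamma>) \<longlongrightarrow> 0) (at x within S)"
      by (rule tendsto_zero_powrI[OF d tendsto_const]) (use assms(2) in auto)
    then have "((\<lambda>y. K * dist y x powr \<gamma>) \<longlongrightarrow> 0) (at x within S)"
      by (rule tendsto_mult_right_zero)
    then have "((\<lambda>y. f y - f x) \<longlongrightarrow> 0) (at x within S)"
      by (rule Lim_null_comparison[OF ev])
    then show "(f \<longlongrightarrow> f x) (at x within S)" by (rule LIM_zero_cancel)
  qed
qed

lemma holder_bdd: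
  assumes "holder_on \<gamma> (CT T) f" "T > 0" "\<gamma> > 0"
  shows "\<exists>M\<ge>0. \<forall>x\<in>CT T. \<bar>f x\<bar> \<le> M"
proof -
  obtain K where K: "K \<ge> 0" "\<forall>x\<in>CT T. \<forall>y\<in>CT T. \<bar>f x - f y\<bar> \<le> K * dist x y powr \<gamma>"
    using holder_K[OF assms(1)] by blast
  define x0 where "x0 = (T / 2, T / 4)"
  have x0: "x0 \<in> CT T" unfolding x0_def CT_def using assms by auto
  have "\<bar>f x\<bar> \<le> \<bar>f x0\<bar> + K * (2 * T) powr \<gamma>" if x: "x \<in> CT T" for x
  proof -
    obtain a b where ab: "x = (a, b)" by fastforce
    have "dist x x0 \<le> \<bar>a - T / 2\<bar> + \<bar>b - T / 4\<bar>" unfolding ab x0_def by (rule dist_le)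
    also have "\<dots> \<le> 2 * T" using x unfolding ab CT_def by auto
    finally have "dist x x0 powr \<gamma> \<le> (2 * T) powr \<gamma>"
      using assms by (intro powr_mono2) auto
    then have "K * dist x x0 powr \<gamma> \<le> K * (2 * T) powr \<gamma>" using K by (intro mult_left_mono) auto
    moreover have "\<bar>f x - f x0\<bar> \<le> K * dist x x0 powr \<gamma>" using K x x0 by blast
    ultimately show ?thesis by linarith
  qed
  then show ?thesis by (intro exI[of _ "\<bar>f x0\<bar> + K * (2 * T) powr \<gamma>"]) (use K in auto)
qed

lemma pts:
  assumes "(t, s) \<in> CT T" "0 < u" "u < 1"
  shows "(t, s + (t - s) * u) \<in> CT T" "(s + (t - s) * u, s) \<in> CT T"
proof -
  have st: "0 < s" "s < t" "t < T" using assms(1) unfolding CT_def by auto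
  have a1: "0 < (t - s) * u" using st assms by simp
  have "(t - s) * u < (t - s) * 1" using st assms by (intro mult_strict_left_mono) auto
  then have a2: "(t - s) * u < t - s" by simp
  have a3: "0 < s + (t - s) * u" "s < s + (t - s) * u" "s + (t - s) * u < t" "s + (t - s) * u < T"
    using a1 a2 st by linarith+
  show "(t, s + (t - s) * u) \<in> CT T" "(s + (t - s) * u, s) \<in> CT T"
    unfolding CT_def using st a3 by (simp_all only: mem_Collect_eq case_prod_conv)
qed

lemma convex_abs:
  fixes a b d u :: real
  assumes "0 \<le> u" "u \<le> 1" "\<bar>a\<bar> \<le> d" "\<bar>b\<bar> \<le> d"
  shows "\<bar>(1 - u) * a + u * b\<bar> \<le> d"
proof -
  have "\<bar>(1 - u) * a\<bar> \<le> (1 - u) * d" using assms by (simp add: abs_mult mult_left_mono)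
  moreover have "\<bar>u * b\<bar> \<le> u * d" using assms by (simp add: abs_mult mult_left_mono)
  ultimately show ?thesis using abs_triangle_ineq[of "(1 - u) * a" "u * b"] by (simp add: algebra_simps)
qed

lemma powr_2d:
  fixes p d \<gamma> :: real
  assumes "0 \<le> p" "p \<le> 2 * d" "0 < \<gamma>" "\<gamma> \<le> 1"
  shows "p powr \<gamma> \<le> 2 * d powr \<gamma>"
proof -
  have d: "0 \<le> d" using assms by simp
  have "p powr \<gamma> \<le> (2 * d) powr \<gamma>" using assms by (intro powr_mono2) auto
  also have "\<dots> = 2 powr \<gamma> * d powr \<gamma>" using d by (simp add: powr_mult)
  also have "\<dots> \<le> 2 powr 1 * d powr \<gamma>" using assms by (intro mult_right_mono powr_mono) auto
  finally show ?thesis by simp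
qed

theorem lemma3p13:
  fixes T \<gamma> :: real and g1 g2 :: "real \<Rightarrow> real \<Rightarrow> real"
  assumes "T > 0" and "0 < \<gamma>" and "\<gamma> \<le> 1"
    and "holder_on \<gamma> (CT T) (\<lambda>(t, s). g1 t s)"
    and "holder_on \<gamma> (CT T) (\<lambda>(t, s). g2 t s)"
  shows "holder_on \<gamma> (CT T)
           (\<lambda>(t, s). integral {s..t} (\<lambda>z. g1 t z * g2 z s / (sqrt (t - z) * sqrt (z - s))))"
proof -
  obtain K1 where K1: "K1 \<ge> 0" "\<forall>x\<in>CT T. \<forall>y\<in>CT T. \<bar>(\<lambda>(t, s). g1 t s) x - (\<lambda>(t, s). g1 t s) y\<bar> \<le> K1 * dist x y powr \<gamma>"
    using holder_K[OF assms(4)] by blast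
  obtain K2 where K2: "K2 \<ge> 0" "\<forall>x\<in>CT T. \<forall>y\<in>CT T. \<bar>(\<lambda>(t, s). g2 t s) x - (\<lambda>(t, s). g2 t s) y\<bar> \<le> K2 * dist x y powr \<gamma>"
    using holder_K[OF assms(5)] by blast
  obtain M1 where M1: "M1 \<ge> 0" "\<forall>x\<in>CT T. \<bar>(\<lambda>(t, s). g1 t s) x\<bar> \<le> M1"
    using holder_bdd[OF assms(4,1,2)] by blast
  obtain M2 where M2: "M2 \<ge> 0" "\<forall>x\<in>CT T. \<bar>(\<lambda>(t, s). g2 t s) x\<bar> \<le> M2"
    using holder_bdd[OF assms(5,1,2)] by blast
  have H1: "\<bar>g1 a b - g1 c d\<bar> \<le> K1 * dist (a, b) (c, d) powr \<gamma>" if "(a, b) \<in> CT T" "(c, d) \<in> CT T" for a b c d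
    using K1(2) that by fastforce
  have H2: "\<bar>g2 a b - g2 c d\<bar> \<le> K2 * dist (a, b) (c, d) powr \<gamma>" if "(a, b) \<in> CT T" "(c, d) \<in> CT T" for a b c d
    using K2(2) that by fastforce
  have B1: "\<bar>g1 a b\<bar> \<le> M1" if "(a, b) \<in> CT T" for a b using M1(2) that by fastforce
  have B2: "\<bar>g2 a b\<bar> \<le> M2" if "(a, b) \<in> CT T" for a b using M2(2) that by fastforce
  have C1: "continuous_on (CT T) (\<lambda>(t, s). g1 t s)" by (rule holder_cont[OF assms(4,2)])
  have C2: "continuous_on (CT T) (\<lambda>(t, s). g2 t s)" by (rule holder_cont[OF assms(5,2)])
  define G where "G = (\<lambda>t s u. g1 t (s + (t - s) * u) * g2 (s + (t - s) * u) s / sqrt (u * (1 - u)))"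
  have IntG: "G t s integrable_on {0..1}" if ts: "(t, s) \<in> CT T" for t s
  proof (rule dom_int[where B = "M1 * M2"])
    have c1: "continuous_on {0<..<1} (\<lambda>u. (\<lambda>(t, s). g1 t s) (t, s + (t - s) * u))"
      by (rule continuous_on_compose2[OF C1]) (auto intro!: continuous_intros pts(1)[OF ts])
    have c2: "continuous_on {0<..<1} (\<lambda>u. (\<lambda>(t, s). g2 t s) (s + (t - s) * u, s))"
      by (rule continuous_on_compose2[OF C2]) (auto intro!: continuous_intros pts(2)[OF ts])
    show "continuous_on {0<..<1} (G t s)"
      unfolding G_def using c1 c2 by (auto intro!: continuous_intros)
    fix u :: real assume u: "u \<in> {0<..<1}"
    have p1: "\<bar>g1 t (s + (t - s) * u)\<bar> \<le> M1" using B1 pts(1)[OF ts] u by auto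
    have p2: "\<bar>g2 (s + (t - s) * u) s\<bar> \<le> M2" using B2 pts(2)[OF ts] u by auto
    have "\<bar>G t s u\<bar> = \<bar>g1 t (s + (t - s) * u)\<bar> * \<bar>g2 (s + (t - s) * u) s\<bar> * (1 / sqrt (u * (1 - u)))"
      unfolding G_def using u by (simp add: abs_mult)
    also have "\<dots> \<le> M1 * M2 * w u"
      using u p1 p2 inv_le_w[of u] M1(1) M2(1) by (intro mult_mono) auto
    finally show "\<bar>G t s u\<bar> \<le> M1 * M2 * w u" .
  qed
  have Hval: "integral {s..t} (\<lambda>z. g1 t z * g2 z s / (sqrt (t - z) * sqrt (z - s))) = integral {0..1} (G t s)"
    if ts: "(t, s) \<in> CT T" for t s
  proof -
    have "s < t" using ts unfolding CT_def by auto
    from transform[of s t "\<lambda>z. g1 t z * g2 z s", OF this] IntG[OF ts]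
    show ?thesis unfolding G_def by simp
  qed
  define C where "C = 2 * (K1 * M2 + M1 * K2)"
  have C0: "C \<ge> 0" unfolding C_def using K1(1) K2(1) M1(1) M2(1) by simp
  define W where "W = integral {0..1} w"
  show ?thesis unfolding holder_on_def
  proof (intro exI[of _ "C * W"] ballI)
    fix x y assume x: "x \<in> CT T" and y: "y \<in> CT T"
    obtain t s where xts: "x = (t, s)" by fastforce
    obtain t' s' where yts: "y = (t', s')" by fastforce
    define d where "d = dist x y"
    have d0: "0 \<le> d" unfolding d_def by simp
    have dt: "\<bar>t - t'\<bar> \<le> d" using dist_fst_le[of x y] unfolding d_def xts yts by (simp add: dist_real_def)
    have ds: "\<bar>s - s'\<bar> \<le> d" using dist_snd_le[of x y] unfolding d_def xts yts by (simp add: dist_real_def)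
    have pw: "\<bar>G t s u - G t' s' u\<bar> \<le> C * d powr \<gamma> * w u" if u: "u \<in> {0..1}" for u
    proof (cases "u = 0 \<or> u = 1")
      case True
      then have "G t s u = 0" "G t' s' u = 0" unfolding G_def by auto
      moreover have "0 \<le> C * d powr \<gamma> * w u" using C0 w_nonneg[of u] u by simp
      ultimately show ?thesis by simp
    next
      case False
      then have u': "0 < u" "u < 1" using u by auto
      define z where "z = s + (t - s) * u"
      define z' where "z' = s' + (t' - s') * u"
      have inCT: "(t, z) \<in> CT T" "(z, s) \<in> CT T" "(t', z') \<in> CT T" "(z', s') \<in> CT T"
        unfolding z_def z'_def using pts[OF x[unfolded xts] u'] pts[OF y[unfolded yts] u'] by auto
      have zz: "\<bar>z - z'\<bar> \<le> d"
      proof -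
        have "z - z' = (1 - u) * (s - s') + u * (t - t')" unfolding z_def z'_def by (simp add: algebra_simps)
        then show ?thesis using convex_abs[of u "s - s'" d "t - t'"] u' ds dt by simp
      qed
      have dp: "dist (t, z) (t', z') powr \<gamma> \<le> 2 * d powr \<gamma>"
        using dist_le[of t z t' z'] dt zz assms(2,3) by (intro powr_2d) auto
      have dq: "dist (z, s) (z', s') powr \<gamma> \<le> 2 * d powr \<gamma>"
        using dist_le[of z s z' s'] ds zz assms(2,3) by (intro powr_2d) auto
      have e1: "\<bar>g1 t z - g1 t' z'\<bar> \<le> K1 * (2 * d powr \<gamma>)"
        using H1[OF inCT(1,3)] mult_left_mono[OF dp K1(1)] by linarith
      have e2: "\<bar>g2 z s - g2 z' s'\<bar> \<le> K2 * (2 * d powr \<gamma>)"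
        using H2[OF inCT(2,4)] mult_left_mono[OF dq K2(1)] by linarith
      have b1: "\<bar>g1 t' z'\<bar> \<le> M1" using B1[OF inCT(3)] .
      have b2: "\<bar>g2 z s\<bar> \<le> M2" using B2[OF inCT(2)] .
      have "g1 t z * g2 z s - g1 t' z' * g2 z' s' = (g1 t z - g1 t' z') * g2 z s + g1 t' z' * (g2 z s - g2 z' s')"
        by (simp add: algebra_simps)
      then have "\<bar>g1 t z * g2 z s - g1 t' z' * g2 z' s'\<bar> \<le> \<bar>g1 t z - g1 t' z'\<bar> * \<bar>g2 z s\<bar> + \<bar>g1 t' z'\<bar> * \<bar>g2 z s - g2 z' s'\<bar>"
        by (metis abs_mult abs_triangle_ineq)
      also have "\<dots> \<le> K1 * (2 * d powr \<gamma>) * M2 + M1 * (K2 * (2 * d powr \<gamma>))"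
        using e1 e2 b1 b2 by (intro add_mono mult_mono) auto
      also have "\<dots> = C * d powr \<gamma>" unfolding C_def by (simp add: algebra_simps)
      finally have A: "\<bar>g1 t z * g2 z s - g1 t' z' * g2 z' s'\<bar> \<le> C * d powr \<gamma>" .
      have "\<bar>G t s u - G t' s' u\<bar> = \<bar>g1 t z * g2 z s - g1 t' z' * g2 z' s'\<bar> * (1 / sqrt (u * (1 - u)))"
        unfolding G_def z_def[symmetric] z'_def[symmetric] using u'
        by (simp add: abs_mult diff_divide_distrib[symmetric])
      also have "\<dots> \<le> C * d powr \<gamma> * w u"
        using A inv_le_w[OF u'] u' by (intro mult_mono) auto
      finally show ?thesis .
    qed
    have "\<bar>(\<lambda>(t, s). integral {s..t} (\<lambda>z. g1 t z * g2 z s / (sqrt (t - z) * sqrt (z - s)))) x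
          - (\<lambda>(t, s). integral {s..t} (\<lambda>z. g1 t z * g2 z s / (sqrt (t - z) * sqrt (z - s)))) y\<bar>
          = \<bar>integral {0..1} (G t s) - integral {0..1} (G t' s')\<bar>"
      using Hval[OF x[unfolded xts]] Hval[OF y[unfolded yts]] unfolding xts yts by simp
    also have "\<dots> = \<bar>integral {0..1} (\<lambda>u. G t s u - G t' s' u)\<bar>"
      using integral_diff[OF IntG[OF x[unfolded xts]] IntG[OF y[unfolded yts]]] by simp
    also have "\<dots> \<le> integral {0..1} (\<lambda>u. C * d powr \<gamma> * w u)"
      using integral_norm_bound_integral[OF integrable_diff[OF IntG[OF x[unfolded xts]] IntG[OF y[unfolded yts]]]
          integrable_on_cmult_left[OF w_int, of "C * d powr \<gamma>"]] pw by simp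
    also have "\<dots> = C * W * d powr \<gamma>"
      unfolding W_def by (simp add: algebra_simps)
    finally show "\<bar>(\<lambda>(t, s). integral {s..t} (\<lambda>z. g1 t z * g2 z s / (sqrt (t - z) * sqrt (z - s)))) x
          - (\<lambda>(t, s). integral {s..t} (\<lambda>z. g1 t z * g2 z s / (sqrt (t - z) * sqrt (z - s)))) y\<bar>
          \<le> C * W * dist x y powr \<gamma>" unfolding d_def .
  qed
qed

end
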